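(* Assume the network $\Sigma$ is well-posed and let $\mathcal{A}\subset X$ be nonempty and closed. (i) $\Sigma$ is ISS with respect to $\mathcal{A}$ if and only if there is $M\in\mathbb{N}$ such that $\Sigma^M$ is ISS with respect to $\mathcal{A}$ and $f$ is $\mathcal{K}$-bounded with respect to $\mathcal{A}$. (ii) $\Sigma$ is eISS with respect to $\mathcal{A}$ if and only if there is $M\in\mathbb{N}$ such that $\Sigma^M$ is eISS with respect to $\mathcal{A}$ and $f$ is $\mathcal{K}$-bounded with respect to $\mathcal{A}$ with a linear function $\kappa_1$ (i.e. $\kappa_1(s)=cs$ for some $c>0$).
   Context: Setting: for each $i\in\mathbb{N}$ fix positive integers $n_i,p_i$, norms $|\cdot|$ on $\mathbb{R}^{n_i},\mathbb{R}^{p_i}$, and a finite set $I_i\subset\mathbb{N}\setminus\{i\}$ such that each set $\{j: i\in I_j\}$ is finite; let $f_i:\mathbb{R}^{n_i}\times\prod_{j\in I_i}\mathbb{R}^{n_j}\times\mathbb{R}^{p_i}\to\mathbb{R}^{n_i}$ be continuous. $X$ (resp. $U$) is the space of sequences $(x_i)$ with $x_i\in\mathbb{R}^{n_i}$ (resp. $(u_i)$ with $u_i\in\mathbb{R}^{p_i}$) with finite norm $|x|_\infty=\sup_i|x_i|$ (resp. $|u|_\infty=\sup_i|u_i|$); $X_E=\prod_i\mathbb{R}^{n_i}$; $f:X_E\times U\to X_E$, $f(x,u)_i=f_i(x_i,(x_j)_{j\in I_i},u_i)$. The network $\Sigma$ is $x(k+1)=f(x(k),u(k))$, $k\in\mathbb{N}_0$.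 $\mathcal{U}$ is the set of sequences $u:\mathbb{N}_0\to U$ with $\|u\|_\infty:=\sup_{k\ge0}|u(k)|_\infty<\infty$; $x(k,\xi,u)$ is the solution with $x(0)=\xi$. $\Sigma$ is well-posed if $f(X\times U)\subset X$. For $\mathcal{A}\subset X$ nonempty closed, $|x|_{\mathcal{A}}:=\inf_{y\in\mathcal{A}}|x-y|_\infty$. $f$ is $\mathcal{K}$-bounded w.r.t. $\mathcal{A}$ if there are $\kappa_1,\kappa_2\in\mathcal{K}$ with $|f(\xi,\mu)|_{\mathcal{A}}\le\kappa_1(|\xi|_{\mathcal{A}})+\kappa_2(|\mu|_\infty)$ for all $\xi\in X,\mu\in U$. $\Sigma$ is ISS w.r.t. $\mathcal{A}$ if there exist $\beta\in\mathcal{KL}$, $\gamma\in\mathcal{K}$ with $|x(k,\xi,u)|_{\mathcal{A}}\le\max\{\beta(|\xi|_{\mathcal{A}},k),\gamma(\|u\|_\infty)\}$ for all $\xi\in X$, $u\in\mathcal{U}$, $k\in\mathbb{N}_0$; it is eISS if additionally $\beta$ can be taken as $\beta(r,k)=C\rho^k r$ with $C\ge1$, $\rho\in[0,1)$. For $M\in\mathbb{N}$, $\Sigma^M$ denotes the $M$-iterate system $x^+=f^M(x,(u_0,\dots,u_{M-1}))$, where $f^1=f$ and $f^{k+1}(x,(u_0,\dots,u_k))=f(f^k(x,(u_0,\dots,u_{k-1})),u_k)$; $\Sigma^M$ is ISS w.r.t. $\mathcal{A}$ if there exist $\beta\in\mathcal{KL}$, $\gamma\in\mathcal{K}$ with $|x(Mk,\xi,u)|_{\mathcal{A}}\le\max\{\beta(|\xi|_{\mathcal{A}},k),\gamma(\|u\|_\infty)\}$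 for all $\xi\in X$, $u\in\mathcal{U}$, $k\in\mathbb{N}_0$, and eISS if $\beta$ can be taken as $C\rho^k r$ with $C\ge1$, $\rho\in[0,1)$. $\mathcal{K}$: continuous strictly increasing $\gamma:[0,\infty)\to[0,\infty)$ with $\gamma(0)=0$; $\mathcal{L}$: continuous strictly decreasing functions tending to $0$; $\mathcal{KL}$: continuous $\beta$ with $\beta(\cdot,t)\in\mathcal{K}$ and $\beta(r,\cdot)\in\mathcal{L}$ for $r>0$. *)

theory Defs
  imports "HOL-Analysis.Analysis"
begin

text \<open>Vectors of R^d are modelled as functions nat => real vanishing from index d on.
  The product (pointwise) topology on nat => real, restricted to such vectors,
  is the Euclidean topology of R^d.\<close>

type_synonym vec = "nat \<Rightarrow> real"
type_synonym seqv = "nat \<Rightarrow> vec"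

definition Rn :: "nat \<Rightarrow> vec set" where
  "Rn d = {v. \<forall>k\<ge>d. v k = 0}"

definition norm_on :: "nat \<Rightarrow> (vec \<Rightarrow> real) \<Rightarrow> bool" where
  "norm_on d N \<longleftrightarrow>
     (\<forall>v\<in>Rn d. 0 \<le> N v \<and> (N v = 0 \<longleftrightarrow> v = (\<lambda>_. 0))) \<and>
     (\<forall>v\<in>Rn d. \<forall>c. N (\<lambda>k. c * v k) = \<bar>c\<bar> * N v) \<and>
     (\<forall>v\<in>Rn d. \<forall>w\<in>Rn d. N (\<lambda>k. v k + w k) \<le> N v + N w)"

definition seqE :: "(nat \<Rightarrow> nat) \<Rightarrow> seqv set" where
  "seqE d = {x. \<forall>i. x i \<in> Rn (d i)}"

definition seqB :: "(nat \<Rightarrow> nat) \<Rightarrow> (nat \<Rightarrow> vec \<Rightarrow> real) \<Rightarrow> seqv set" where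
  "seqB d N = {x \<in> seqE d. bdd_above (range (\<lambda>i. N i (x i)))}"

definition supn :: "(nat \<Rightarrow> vec \<Rightarrow> real) \<Rightarrow> seqv \<Rightarrow> real" where
  "supn N x = (SUP i. N i (x i))"

definition network_data ::
  "(nat \<Rightarrow> nat) \<Rightarrow> (nat \<Rightarrow> nat) \<Rightarrow> (nat \<Rightarrow> vec \<Rightarrow> real) \<Rightarrow> (nat \<Rightarrow> vec \<Rightarrow> real)
    \<Rightarrow> (nat \<Rightarrow> nat set) \<Rightarrow> (nat \<Rightarrow> vec \<Rightarrow> seqv \<Rightarrow> vec \<Rightarrow> vec) \<Rightarrow> bool" where
  "network_data n p Nx Nu I fi \<longleftrightarrow>
     (\<forall>i. 0 < n i \<and> 0 < p i) \<and>
     (\<forall>i. norm_on (n i) (Nx i) \<and> norm_on (p i) (Nu i)) \<and>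
     (\<forall>i. finite (I i) \<and> i \<notin> I i) \<and>
     (\<forall>i. finite {j. i \<in> I j}) \<and>
     (\<forall>i. (\<forall>a\<in>Rn (n i). \<forall>y. (\<forall>j. y j \<in> Rn (n j) \<and> (j \<notin> I i \<longrightarrow> y j = (\<lambda>_. 0))) \<longrightarrow>
             (\<forall>c\<in>Rn (p i). fi i a y c \<in> Rn (n i))) \<and>
          continuous_on
            (Rn (n i) \<times> {y. \<forall>j. y j \<in> Rn (n j) \<and> (j \<notin> I i \<longrightarrow> y j = (\<lambda>_. 0))} \<times> Rn (p i))
            (\<lambda>(a, y, c). fi i a y c))"

definition net_map :: "(nat \<Rightarrow> nat set) \<Rightarrow> (nat \<Rightarrow> vec \<Rightarrow> seqv \<Rightarrow> vec \<Rightarrow> vec) \<Rightarrow> seqv \<Rightarrow> seqv \<Rightarrow> seqv" where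
  "net_map I fi x u = (\<lambda>i. fi i (x i) (\<lambda>j. if j \<in> I i then x j else (\<lambda>_. 0)) (u i))"

definition well_posed :: "(nat \<Rightarrow> nat) \<Rightarrow> (nat \<Rightarrow> nat) \<Rightarrow> (nat \<Rightarrow> vec \<Rightarrow> real) \<Rightarrow> (nat \<Rightarrow> vec \<Rightarrow> real)
    \<Rightarrow> (seqv \<Rightarrow> seqv \<Rightarrow> seqv) \<Rightarrow> bool" where
  "well_posed n p Nx Nu F \<longleftrightarrow> (\<forall>\<xi>\<in>seqB n Nx. \<forall>\<mu>\<in>seqB p Nu. F \<xi> \<mu> \<in> seqB n Nx)"

definition dist_set :: "(nat \<Rightarrow> vec \<Rightarrow> real) \<Rightarrow> seqv set \<Rightarrow> seqv \<Rightarrow> real" where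
  "dist_set N A x = (INF y\<in>A. supn N (\<lambda>i k. x i k - y i k))"

definition closed_in_X :: "(nat \<Rightarrow> nat) \<Rightarrow> (nat \<Rightarrow> vec \<Rightarrow> real) \<Rightarrow> seqv set \<Rightarrow> bool" where
  "closed_in_X n N A \<longleftrightarrow>
     (\<forall>x\<in>seqB n N. (\<forall>e>0. \<exists>y\<in>A. supn N (\<lambda>i k. x i k - y i k) < e) \<longrightarrow> x \<in> A)"

definition inputs :: "(nat \<Rightarrow> nat) \<Rightarrow> (nat \<Rightarrow> vec \<Rightarrow> real) \<Rightarrow> (nat \<Rightarrow> seqv) set" where
  "inputs p Nu = {u. (\<forall>k. u k \<in> seqB p Nu) \<and> bdd_above (range (\<lambda>k. supn Nu (u k)))}"

definition linf :: "(nat \<Rightarrow> vec \<Rightarrow> real) \<Rightarrow> (nat \<Rightarrow> seqv) \<Rightarrow> real" where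
  "linf Nu u = (SUP k. supn Nu (u k))"

primrec traj :: "(seqv \<Rightarrow> seqv \<Rightarrow> seqv) \<Rightarrow> seqv \<Rightarrow> (nat \<Rightarrow> seqv) \<Rightarrow> nat \<Rightarrow> seqv" where
  "traj F \<xi> u 0 = \<xi>"
| "traj F \<xi> u (Suc k) = F (traj F \<xi> u k) (u k)"

definition classK :: "(real \<Rightarrow> real) \<Rightarrow> bool" where
  "classK g \<longleftrightarrow> continuous_on {0..} g \<and> strict_mono_on {0..} g \<and> g 0 = 0"

definition classL :: "(real \<Rightarrow> real) \<Rightarrow> bool" where
  "classL g \<longleftrightarrow> continuous_on {0..} g \<and>
     (\<forall>s\<ge>0. \<forall>t. s < t \<longrightarrow> g t < g s) \<and> (g \<longlongrightarrow> 0) at_top"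

definition classKL :: "(real \<Rightarrow> real \<Rightarrow> real) \<Rightarrow> bool" where
  "classKL b \<longleftrightarrow> continuous_on ({0..} \<times> {0..}) (\<lambda>(r, t). b r t) \<and>
     (\<forall>t\<ge>0. classK (\<lambda>r. b r t)) \<and> (\<forall>r>0. classL (\<lambda>t. b r t))"

definition K_bounded where
  "K_bounded n p Nx Nu F A \<longleftrightarrow> (\<exists>k1 k2. classK k1 \<and> classK k2 \<and>
     (\<forall>\<xi>\<in>seqB n Nx. \<forall>\<mu>\<in>seqB p Nu.
        dist_set Nx A (F \<xi> \<mu>) \<le> k1 (dist_set Nx A \<xi>) + k2 (supn Nu \<mu>)))"

definition K_bounded_lin where
  "K_bounded_lin n p Nx Nu F A \<longleftrightarrow> (\<exists>c k2. c > 0 \<and> classK k2 \<and>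
     (\<forall>\<xi>\<in>seqB n Nx. \<forall>\<mu>\<in>seqB p Nu.
        dist_set Nx A (F \<xi> \<mu>) \<le> c * dist_set Nx A \<xi> + k2 (supn Nu \<mu>)))"

definition ISS where
  "ISS n p Nx Nu F A \<longleftrightarrow> (\<exists>b g. classKL b \<and> classK g \<and>
     (\<forall>\<xi>\<in>seqB n Nx. \<forall>u\<in>inputs p Nu. \<forall>k.
        dist_set Nx A (traj F \<xi> u k) \<le> max (b (dist_set Nx A \<xi>) (real k)) (g (linf Nu u))))"

definition eISS where
  "eISS n p Nx Nu F A \<longleftrightarrow> (\<exists>C \<rho> g. C \<ge> 1 \<and> 0 \<le> \<rho> \<and> \<rho> < 1 \<and> classK g \<and>
     (\<forall>\<xi>\<in>seqB n Nx. \<forall>u\<in>inputs p Nu. \<forall>k.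
        dist_set Nx A (traj F \<xi> u k) \<le> max (C * \<rho> ^ k * dist_set Nx A \<xi>) (g (linf Nu u))))"

text \<open>ISS / eISS of the M-iterate system Sigma^M: x(Mk) = f^M-trajectory.\<close>
definition ISS_iter where
  "ISS_iter M n p Nx Nu F A \<longleftrightarrow> (\<exists>b g. classKL b \<and> classK g \<and>
     (\<forall>\<xi>\<in>seqB n Nx. \<forall>u\<in>inputs p Nu. \<forall>k.
        dist_set Nx A (traj F \<xi> u (M * k)) \<le> max (b (dist_set Nx A \<xi>) (real k)) (g (linf Nu u))))"

definition eISS_iter where
  "eISS_iter M n p Nx Nu F A \<longleftrightarrow> (\<exists>C \<rho> g. C \<ge> 1 \<and> 0 \<le> \<rho> \<and> \<rho> < 1 \<and> classK g \<and>
     (\<forall>\<xi>\<in>seqB n Nx. \<forall>u\<in>inputs p Nu. \<forall>k.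
        dist_set Nx A (traj F \<xi> u (M * k)) \<le> max (C * \<rho> ^ k * dist_set Nx A \<xi>) (g (linf Nu u))))"

end

theory Submission
  imports Defs
begin

lemma classK_mono: "classK g \<Longrightarrow> 0 \<le> x \<Longrightarrow> x \<le> y \<Longrightarrow> g x \<le> g y"
  unfolding classK_def
  by (metis atLeast_iff dual_order.trans less_eq_real_def strict_mono_onD)

lemma classK_nonneg: "classK g \<Longrightarrow> 0 \<le> x \<Longrightarrow> 0 \<le> g x"
  using classK_mono[of g 0 x] by (simp add: classK_def)

lemma classK_max: "classK g \<Longrightarrow> 0 \<le> x \<Longrightarrow> 0 \<le> y \<Longrightarrow> g (max x y) = max (g x) (g y)"
  using classK_mono[of g x y] classK_mono[of g y x] by (auto simp: max_def)

lemma classK_comp: assumes f: "classK f" and g: "classK g" shows "classK (\<lambda>x. f (g x))"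
proof -
  have im: "g ` {0..} \<subseteq> {0..}" using classK_nonneg[OF g] by auto
  have "continuous_on {0..} (\<lambda>x. f (g x))"
    by (rule continuous_on_compose2[OF _ _ im]) (use f g in \<open>auto simp: classK_def\<close>)
  moreover have "strict_mono_on {0..} (\<lambda>x. f (g x))"
  proof (rule strict_mono_onI)
    fix r s :: real assume "r \<in> {0..}" "s \<in> {0..}" "r < s"
    then have 1: "g r < g s" using g unfolding classK_def by (blast intro: strict_mono_onD)
    have 2: "0 \<le> g r" using classK_nonneg[OF g] \<open>r \<in> {0..}\<close> by simp
    have "g r \<in> {0..}" "g s \<in> {0..}" using 1 2 by auto
    then show "f (g r) < f (g s)" using f 1 unfolding classK_def by (blast intro: strict_mono_onD)
  qed
  ultimately show ?thesis using f g by (simp add: classK_def)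
qed

lemma classK_add: assumes f: "classK f" and g: "classK g" shows "classK (\<lambda>x. f x + g x)"
proof -
  have "continuous_on {0..} (\<lambda>x. f x + g x)"
    using f g by (auto simp: classK_def intro!: continuous_intros)
  moreover have "strict_mono_on {0..} (\<lambda>x. f x + g x)"
  proof (rule strict_mono_onI)
    fix r s :: real assume "r \<in> {0..}" "s \<in> {0..}" "r < s"
    then have "g r < g s" "f r < f s" using f g unfolding classK_def by (blast intro: strict_mono_onD)+
    then show "f r + g r < f s + g s" by simp
  qed
  ultimately show ?thesis using f g by (simp add: classK_def)
qed

lemma classK_lin: "(c::real) > 0 \<Longrightarrow> classK (\<lambda>x. x * c)"
  unfolding classK_def by (auto intro!: continuous_intros strict_mono_onI)

lemma classK_lin2: "(c::real) > 0 \<Longrightarrow> classK (\<lambda>x. c * x)"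
  unfolding classK_def by (auto intro!: continuous_intros strict_mono_onI)

lemma classK_id: "classK (\<lambda>x. x)"
  unfolding classK_def by (auto intro!: continuous_intros strict_mono_onI)

lemma classKL_antimono:
  assumes b: "classKL b" and s: "0 \<le> s" and t: "0 \<le> t1" "t1 \<le> t2"
  shows "b s t2 \<le> b s t1"
proof (cases "s = 0")
  case True
  then show ?thesis using b t by (auto simp: classKL_def classK_def)
next
  case False
  then have "classL (\<lambda>t. b s t)" using b s by (auto simp: classKL_def)
  then show ?thesis using t by (cases "t1 = t2") (auto simp: classL_def less_eq_real_def)
qed

definition sig :: "(real \<Rightarrow> real) \<Rightarrow> real \<Rightarrow> real" where
  "sig k1 = (\<lambda>s. k1 s + 2 * s)"

lemma classK_sig: "classK k1 \<Longrightarrow> classK (sig k1)"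
  unfolding sig_def by (rule classK_add) (auto intro: classK_lin2)

lemma sig_ge: "classK k1 \<Longrightarrow> 0 \<le> x \<Longrightarrow> x \<le> sig k1 x"
  unfolding sig_def using classK_nonneg[of k1 x] by simp

lemma funpow_ge: "classK k1 \<Longrightarrow> 0 \<le> x \<Longrightarrow> x \<le> (sig k1 ^^ r) x"
proof (induction r)
  case 0 then show ?case by simp
next
  case (Suc r)
  then show ?case using sig_ge[of k1 "(sig k1 ^^ r) x"] by simp
qed

lemma funpow_le_M: assumes "classK k1" "0 \<le> x" "r \<le> M"
  shows "(sig k1 ^^ r) x \<le> (sig k1 ^^ M) x"
proof -
  have "M = (M - r) + r" using assms by simp
  then have "(sig k1 ^^ M) x = (sig k1 ^^ (M - r)) ((sig k1 ^^ r) x)"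
    by (metis comp_apply funpow_add)
  moreover have "0 \<le> (sig k1 ^^ r) x" using funpow_ge[OF assms(1,2), of r] assms by simp
  ultimately show ?thesis using funpow_ge[OF assms(1)] by simp
qed

lemma classK_funpow: "classK k1 \<Longrightarrow> classK (sig k1 ^^ m)"
proof (induction m)
  case 0 then show ?case using classK_id by (simp add: id_def)
next
  case (Suc m)
  then have "classK (\<lambda>x. sig k1 ((sig k1 ^^ m) x))"
    using classK_comp classK_sig by blast
  then show ?case by (simp add: comp_def)
qed

lemma iter_bound:
  fixes d :: "nat \<Rightarrow> real"
  assumes K1: "classK k1" and dn: "\<And>k. 0 \<le> d k" and h: "0 \<le> h"
    and step: "\<And>k. d (Suc k) \<le> k1 (d k) + h"
  shows "d (k + r) + h \<le> (sig k1 ^^ r) (d k + h)"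
proof (induction r)
  case 0 then show ?case by simp
next
  case (Suc r)
  have "d (k + Suc r) + h \<le> k1 (d (k+r)) + 2*h" using step[of "k+r"] by simp
  also have "\<dots> \<le> sig k1 (d (k + r) + h)"
    unfolding sig_def using classK_mono[OF K1, of "d (k+r)" "d (k+r) + h"] dn[of "k+r"] h by simp
  also have "\<dots> \<le> sig k1 ((sig k1 ^^ r) (d k + h))"
    using classK_mono[OF classK_sig[OF K1] _ Suc.IH] dn[of "k+r"] h by simp
  also have "\<dots> = (sig k1 ^^ Suc r) (d k + h)" by simp
  finally show ?case .
qed

lemma norm_diff_le:
  assumes N: "norm_on d N" and v: "v \<in> Rn d" and w: "w \<in> Rn d"
  shows "N (\<lambda>k. v k - w k) \<le> N v + N w"
proof -
  have w': "(\<lambda>k. (-1) * w k) \<in> Rn d" using w by (simp add: Rn_def)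
  have tri: "\<forall>v\<in>Rn d. \<forall>w\<in>Rn d. N (\<lambda>k. v k + w k) \<le> N v + N w"
    using N by (simp add: norm_on_def)
  have "N (\<lambda>k. v k + (\<lambda>k. (-1) * w k) k) \<le> N v + N (\<lambda>k. (-1) * w k)"
    using bspec[OF bspec[OF tri v] w'] .
  moreover have hom: "\<forall>v\<in>Rn d. \<forall>c. N (\<lambda>k. c * v k) = \<bar>c\<bar> * N v"
    using N by (simp add: norm_on_def)
  moreover have "N (\<lambda>k. (-1) * w k) = N w" using spec[OF bspec[OF hom w], of "-1"] by simp
  ultimately show ?thesis by simp
qed

lemma supn_diff:
  assumes net: "network_data n p Nx Nu I fi" and x: "x \<in> seqB n Nx" and y: "y \<in> seqB n Nx"
  shows "0 \<le> supn Nx (\<lambda>i k. x i k - y i k)"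
proof -
  obtain Bx where Bx: "\<And>i. Nx i (x i) \<le> Bx" using x unfolding seqB_def bdd_above_def by auto
  obtain By where By: "\<And>i. Nx i (y i) \<le> By" using y unfolding seqB_def bdd_above_def by auto
  have N: "\<And>i. norm_on (n i) (Nx i)" using net unfolding network_data_def by blast
  have xi: "\<And>i. x i \<in> Rn (n i)" and yi: "\<And>i. y i \<in> Rn (n i)"
    using x y unfolding seqB_def seqE_def by auto
  have le: "Nx i (\<lambda>k. x i k - y i k) \<le> Bx + By" for i
    using norm_diff_le[OF N xi yi, of i] Bx[of i] By[of i] by simp
  have bdd: "bdd_above (range (\<lambda>i. Nx i (\<lambda>k. x i k - y i k)))"
    using le by (intro bdd_aboveI[where M="Bx + By"]) auto
  have d0: "(\<lambda>k. x 0 k - y 0 k) \<in> Rn (n 0)" using xi[of 0] yi[of 0] by (simp add: Rn_def)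
  have "0 \<le> Nx 0 (\<lambda>k. x 0 k - y 0 k)" using N[of 0] d0 unfolding norm_on_def by blast
  also have "\<dots> \<le> supn Nx (\<lambda>i k. x i k - y i k)"
    unfolding supn_def by (rule cSUP_upper[OF _ bdd]) simp
  finally show ?thesis .
qed

lemma dist_nonneg:
  assumes net: "network_data n p Nx Nu I fi" and A: "A \<subseteq> seqB n Nx" "A \<noteq> {}"
    and x: "x \<in> seqB n Nx"
  shows "0 \<le> dist_set Nx A x"
  unfolding dist_set_def
  by (rule cINF_greatest[OF A(2)]) (use supn_diff[OF net x] A(1) in blast)

lemma supn_nonneg:
  assumes net: "network_data n p Nx Nu I fi" and mu: "\<mu> \<in> seqB p Nu"
  shows "0 \<le> supn Nu \<mu>"
proof -
  have N: "norm_on (p 0) (Nu 0)" using net unfolding network_data_def by blast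
  have "\<mu> 0 \<in> Rn (p 0)" using mu unfolding seqB_def seqE_def by auto
  then have "0 \<le> Nu 0 (\<mu> 0)" using N unfolding norm_on_def by blast
  also have "\<dots> \<le> supn Nu \<mu>"
    unfolding supn_def by (rule cSUP_upper) (use mu in \<open>auto simp: seqB_def\<close>)
  finally show ?thesis .
qed

lemma supn_le_linf:
  assumes u: "u \<in> inputs p Nu" shows "supn Nu (u k) \<le> linf Nu u"
  unfolding linf_def by (rule cSUP_upper) (use u in \<open>auto simp: inputs_def\<close>)

lemma linf_nonneg:
  assumes net: "network_data n p Nx Nu I fi" and u: "u \<in> inputs p Nu"
  shows "0 \<le> linf Nu u"
  using supn_nonneg[OF net, of "u 0"] supn_le_linf[OF u, of 0] u
  by (auto simp: inputs_def)

lemma traj_in: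
  assumes wp: "well_posed n p Nx Nu F" and x: "\<xi> \<in> seqB n Nx" and u: "u \<in> inputs p Nu"
  shows "traj F \<xi> u k \<in> seqB n Nx"
  by (induction k) (use wp x u in \<open>auto simp: well_posed_def inputs_def\<close>)

lemma step_bound:
  assumes net: "network_data n p Nx Nu I fi" and wp: "well_posed n p Nx Nu F"
    and A: "A \<subseteq> seqB n Nx" "A \<noteq> {}"
    and k2: "classK k2"
    and kb: "\<forall>\<xi>\<in>seqB n Nx. \<forall>\<mu>\<in>seqB p Nu.
        dist_set Nx A (F \<xi> \<mu>) \<le> kay (dist_set Nx A \<xi>) + k2 (supn Nu \<mu>)"
    and x: "\<xi> \<in> seqB n Nx" and u: "u \<in> inputs p Nu"
  shows "dist_set Nx A (traj F \<xi> u (Suc k)) \<le> kay (dist_set Nx A (traj F \<xi> u k)) + k2 (linf Nu u)"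
proof -
  have uk: "u k \<in> seqB p Nu" using u by (auto simp: inputs_def)
  have "dist_set Nx A (traj F \<xi> u (Suc k)) \<le> kay (dist_set Nx A (traj F \<xi> u k)) + k2 (supn Nu (u k))"
    using kb traj_in[OF wp x u, of k] uk by simp
  also have "k2 (supn Nu (u k)) \<le> k2 (linf Nu u)"
    by (rule classK_mono[OF k2 supn_nonneg[OF net uk] supn_le_linf[OF u]])
  finally show ?thesis by simp
qed

lemma m_lim: assumes M: "(M::nat) \<ge> 1"
  shows "filterlim (\<lambda>t::real. max (t / real M - 1) 0) at_top at_top"
  unfolding filterlim_at_top
proof
  fix Z :: real
  have "\<forall>t\<ge>(Z + 1) * real M. Z \<le> max (t / real M - 1) 0"
  proof (intro allI impI)
    fix t assume "(Z + 1) * real M \<le> t"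
    then have "Z + 1 \<le> t / real M" using M by (simp add: field_simps)
    then show "Z \<le> max (t / real M - 1) 0" by simp
  qed
  then show "eventually (\<lambda>t. Z \<le> max (t / real M - 1) 0) at_top"
    unfolding eventually_at_top_linorder by blast
qed

lemma classKL_build:
  assumes b: "classKL b" and G: "classK G" and M: "(M::nat) \<ge> 1"
  shows "classKL (\<lambda>s t. G (b s (max (t / real M - 1) 0)) + s * exp (- t))"
proof -
  define m where "m = (\<lambda>t::real. max (t / real M - 1) 0)"
  have m0: "0 \<le> m t" for t by (simp add: m_def)
  have mmono: "t1 \<le> t2 \<Longrightarrow> m t1 \<le> m t2" for t1 t2
  proof -
    assume "t1 \<le> t2"
    then have "t1 / real M \<le> t2 / real M" using M by (simp add: divide_right_mono)
    then show ?thesis unfolding m_def by linarith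
  qed
  have mc: "continuous_on S m" for S unfolding m_def using M by (intro continuous_intros) simp
  have bK: "classK (\<lambda>r. b r (m t))" for t using b m0[of t] by (simp add: classKL_def)
  have bnn: "0 \<le> r \<Longrightarrow> 0 \<le> b r (m t)" for r t using classK_nonneg[OF bK] by blast
  have Gc: "continuous_on {0..} G" using G by (simp add: classK_def)
  have cb: "continuous_on ({0..}\<times>{0..}) (\<lambda>z. b (fst z) (snd z))"
    using b by (simp add: classKL_def split_def)
  have cm: "continuous_on ({0..}\<times>{0..}) (\<lambda>z::real\<times>real. (fst z, m (snd z)))"
  proof -
    have "continuous_on ({0..}\<times>{0..}) (\<lambda>z::real\<times>real. m (snd z))"
      by (rule continuous_on_compose2[OF mc[of UNIV]]) (auto intro: continuous_intros)
    then show ?thesis by (intro continuous_intros)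
  qed
  have im: "(\<lambda>z::real\<times>real. (fst z, m (snd z))) ` ({0..}\<times>{0..}) \<subseteq> {0..}\<times>{0..}"
    using m0 by auto
  have c1: "continuous_on ({0..}\<times>{0..}) (\<lambda>z. b (fst z) (m (snd z)))"
    using continuous_on_compose2[OF cb cm im] by simp
  have im2: "(\<lambda>z. b (fst z) (m (snd z))) ` ({0..}\<times>{0..}) \<subseteq> {0..}"
    using bnn by auto
  have c2: "continuous_on ({0..}\<times>{0..}) (\<lambda>z. G (b (fst z) (m (snd z))))"
    using continuous_on_compose2[OF Gc c1 im2] by simp
  have c3: "continuous_on ({0..}\<times>{0..}) (\<lambda>z. G (b (fst z) (m (snd z))) + fst z * exp (- snd z))"
    by (intro continuous_intros c2)
  have P1: "continuous_on ({0..}\<times>{0..}) (\<lambda>(s, t). G (b s (m t)) + s * exp (- t))"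
    using c3 by (simp add: split_def)
  have P2: "classK (\<lambda>s. G (b s (m t)) + s * exp (- t))" for t
    by (rule classK_add[OF classK_comp[OF G bK] classK_lin]) simp
  have P3: "classL (\<lambda>t. G (b s (m t)) + s * exp (- t))" if s: "s > 0" for s
  proof -
    have bL: "classL (\<lambda>t. b s t)" using b s by (simp add: classKL_def)
    have cbs: "continuous_on {0..} (\<lambda>t. b s t)" using bL by (simp add: classL_def)
    have "continuous_on {0..} (\<lambda>t. b s (m t))"
      by (rule continuous_on_compose2[OF cbs mc]) (use m0 in auto)
    then have "continuous_on {0..} (\<lambda>t. G (b s (m t)))"
      by (rule continuous_on_compose2[OF Gc]) (use bnn s in auto)
    then have Q1: "continuous_on {0..} (\<lambda>t. G (b s (m t)) + s * exp (- t))"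
      by (intro continuous_intros)
    have Q2: "\<forall>s'\<ge>0. \<forall>t. s' < t \<longrightarrow> G (b s (m t)) + s * exp (- t) < G (b s (m s')) + s * exp (- s')"
    proof (intro allI impI)
      fix s' t :: real assume "0 \<le> s'" "s' < t"
      have "b s (m t) \<le> b s (m s')"
        using classKL_antimono[OF b _ m0 mmono] s \<open>s' < t\<close> by simp
      then have "G (b s (m t)) \<le> G (b s (m s'))"
        using classK_mono[OF G] bnn s by simp
      moreover have "s * exp (- t) < s * exp (- s')" using s \<open>s' < t\<close> by simp
      ultimately show "G (b s (m t)) + s * exp (- t) < G (b s (m s')) + s * exp (- s')" by simp
    qed
    have l1: "((\<lambda>t. b s (m t)) \<longlongrightarrow> 0) at_top"
      using filterlim_compose[of "\<lambda>t. b s t" "nhds 0" at_top m at_top] bL m_lim[OF M]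
      by (simp add: classL_def m_def)
    have l2: "((\<lambda>t. G (b s (m t))) \<longlongrightarrow> G 0) at_top"
      by (rule continuous_on_tendsto_compose[OF Gc l1]) (use bnn s in auto)
    have l3: "((\<lambda>t. exp (- t)) \<longlongrightarrow> (0::real)) at_top"
      using filterlim_compose[OF exp_at_bot filterlim_uminus_at_bot_at_top] by simp
    have "((\<lambda>t. G (b s (m t)) + s * exp (- t)) \<longlongrightarrow> G 0 + s * 0) at_top"
      by (intro tendsto_intros l2 l3)
    then have Q3: "((\<lambda>t. G (b s (m t)) + s * exp (- t)) \<longlongrightarrow> 0) at_top"
      using G by (simp add: classK_def)
    show ?thesis using Q1 Q2 Q3 by (simp add: classL_def)
  qed
  show ?thesis using P1 P2 P3 unfolding classKL_def m_def by blast
qed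

lemma ISS_back:
  assumes net: "network_data n p Nx Nu I fi" and wp: "well_posed n p Nx Nu F"
    and A_sub: "A \<subseteq> seqB n Nx" and A_ne: "A \<noteq> {}" and M: "M \<ge> 1"
    and iss: "ISS_iter M n p Nx Nu F A" and kb: "K_bounded n p Nx Nu F A"
  shows "ISS n p Nx Nu F A"
proof -
  obtain b g where b: "classKL b" and g: "classK g" and hb: "\<forall>\<xi>\<in>seqB n Nx. \<forall>u\<in>inputs p Nu. \<forall>k.
        dist_set Nx A (traj F \<xi> u (M * k)) \<le> max (b (dist_set Nx A \<xi>) (real k)) (g (linf Nu u))"
    using iss unfolding ISS_iter_def by blast
  obtain k1 k2 where k1: "classK k1" and k2: "classK k2" and kb': "\<forall>\<xi>\<in>seqB n Nx. \<forall>\<mu>\<in>seqB p Nu.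
        dist_set Nx A (F \<xi> \<mu>) \<le> k1 (dist_set Nx A \<xi>) + k2 (supn Nu \<mu>)"
    using kb unfolding K_bounded_def by blast
  define S where "S = sig k1 ^^ M"
  have S: "classK S" unfolding S_def by (rule classK_funpow[OF k1])
  define G where "G = (\<lambda>x. S (2 * x))"
  have G: "classK G" unfolding G_def using classK_comp[OF S classK_lin2[of 2]] by simp
  define B where "B = (\<lambda>s t. G (b s (max (t / real M - 1) 0)) + s * exp (- t))"
  have B: "classKL B" unfolding B_def by (rule classKL_build[OF b G M])
  define gam where "gam = (\<lambda>v. G (g v + k2 v))"
  have gam: "classK gam" unfolding gam_def by (rule classK_comp[OF G classK_add[OF g k2]])
  have main: "dist_set Nx A (traj F \<xi> u k) \<le> max (B (dist_set Nx A \<xi>) (real k)) (gam (linf Nu u))"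
    if x: "\<xi> \<in> seqB n Nx" and u: "u \<in> inputs p Nu" for \<xi> u k
  proof -
    define d where "d = (\<lambda>k. dist_set Nx A (traj F \<xi> u k))"
    define v where "v = linf Nu u"
    define h where "h = k2 v"
    have dn: "\<And>k. 0 \<le> d k" unfolding d_def by (rule dist_nonneg[OF net A_sub A_ne traj_in[OF wp x u]])
    have v0: "0 \<le> v" unfolding v_def by (rule linf_nonneg[OF net u])
    have h0: "0 \<le> h" unfolding h_def by (rule classK_nonneg[OF k2 v0])
    have st: "\<And>k. d (Suc k) \<le> k1 (d k) + h"
      unfolding d_def h_def v_def by (rule step_bound[OF net wp A_sub A_ne k2 kb' x u])
    define j where "j = k div M"
    define r where "r = k mod M"
    have kk: "k = M * j + r" unfolding j_def r_def by simp
    have rM: "r \<le> M" unfolding r_def using M by (simp add: less_imp_le)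
    have d0: "d 0 = dist_set Nx A \<xi>" unfolding d_def by simp
    have bj0: "0 \<le> b (d 0) (real j)"
    proof -
      have "classK (\<lambda>r. b r (real j))" using b by (simp add: classKL_def)
      then show ?thesis using classK_nonneg dn[of 0] by blast
    qed
    have g0: "0 \<le> g v" using classK_nonneg[OF g v0] .
    have dj: "d (M * j) \<le> max (b (d 0) (real j)) (g v)"
      using hb x u unfolding d_def v_def by simp
    have "d k + h \<le> (sig k1 ^^ r) (d (M*j) + h)"
      using iter_bound[where d=d and h=h, OF k1 dn h0 st, of "M*j" r] kk by simp
    also have "\<dots> \<le> S (d (M*j) + h)"
      unfolding S_def by (rule funpow_le_M[OF k1 _ rM]) (use dn h0 in \<open>simp add: add_nonneg_nonneg\<close>)
    also have "\<dots> \<le> S (max (2 * b (d 0) (real j)) (2 * (g v + h)))"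
    proof (rule classK_mono[OF S])
      show "0 \<le> d (M * j) + h" using dn h0 by (simp add: add_nonneg_nonneg)
      show "d (M * j) + h \<le> max (2 * b (d 0) (real j)) (2 * (g v + h))"
        using dj bj0 g0 h0 by (auto simp: max_def split: if_splits)
    qed
    also have "\<dots> = max (G (b (d 0) (real j))) (gam v)"
      unfolding G_def gam_def h_def using classK_max[OF S] bj0 g0 h0 unfolding h_def by simp
    also have "\<dots> \<le> max (B (d 0) (real k)) (gam v)"
    proof -
      have "real k = real M * real j + real r" using kk by simp
      moreover have "real r < real M" using M unfolding r_def by simp
      ultimately have "real k < real M * (real j + 1)" by (simp add: algebra_simps)
      then have "real k / real M < real j + 1" using M by (simp add: field_simps)
      then have "max (real k / real M - 1) 0 \<le> real j" by simp
      then have "b (d 0) (real j) \<le> b (d 0) (max (real k / real M - 1) 0)"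
        using classKL_antimono[OF b dn[of 0]] by simp
      moreover have "0 \<le> b (d 0) (real j)" by (rule bj0)
      ultimately have "G (b (d 0) (real j)) \<le> G (b (d 0) (max (real k / real M - 1) 0))"
        using classK_mono[OF G] by blast
      also have "\<dots> \<le> B (d 0) (real k)" unfolding B_def using dn[of 0] by simp
      finally show ?thesis by simp
    qed
    finally show ?thesis using h0 d0 unfolding d_def v_def by simp
  qed
  show ?thesis unfolding ISS_def using B gam main by blast
qed

lemma sig_lin_pow: "(sig (\<lambda>s. c * s) ^^ r) x = (c + 2) ^ r * (x::real)"
  by (induction r) (simp_all add: sig_def algebra_simps)

lemma eISS_back:
  assumes net: "network_data n p Nx Nu I fi" and wp: "well_posed n p Nx Nu F"
    and A_sub: "A \<subseteq> seqB n Nx" and A_ne: "A \<noteq> {}" and M: "M \<ge> 1"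
    and iss: "eISS_iter M n p Nx Nu F A" and kb: "K_bounded_lin n p Nx Nu F A"
  shows "eISS n p Nx Nu F A"
proof -
  obtain C \<rho> g where C: "C \<ge> 1" and \<rho>: "0 \<le> \<rho>" "\<rho> < 1" and g: "classK g" and hb: "\<forall>\<xi>\<in>seqB n Nx. \<forall>u\<in>inputs p Nu. \<forall>k.
        dist_set Nx A (traj F \<xi> u (M * k)) \<le> max (C * \<rho> ^ k * dist_set Nx A \<xi>) (g (linf Nu u))"
    using iss unfolding eISS_iter_def by blast
  obtain c k2 where c: "c > 0" and k2: "classK k2" and kb': "\<forall>\<xi>\<in>seqB n Nx. \<forall>\<mu>\<in>seqB p Nu.
        dist_set Nx A (F \<xi> \<mu>) \<le> c * dist_set Nx A \<xi> + k2 (supn Nu \<mu>)"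
    using kb unfolding K_bounded_lin_def by blast
  have k1: "classK (\<lambda>s. c * s)" by (rule classK_lin2[OF c])
  have kb'': "\<forall>\<xi>\<in>seqB n Nx. \<forall>\<mu>\<in>seqB p Nu.
        dist_set Nx A (F \<xi> \<mu>) \<le> (\<lambda>s. c * s) (dist_set Nx A \<xi>) + k2 (supn Nu \<mu>)"
    using kb' by simp
  define L where "L = c + 2"
  have L1: "1 \<le> L" using c unfolding L_def by simp
  define K where "K = L ^ M"
  have K1: "1 \<le> K" unfolding K_def using L1 by simp
  define \<rho>1 where "\<rho>1 = max \<rho> (1/2)"
  have r1: "0 < \<rho>1" "\<rho>1 < 1" "\<rho> \<le> \<rho>1" using \<rho> unfolding \<rho>1_def by auto
  define \<rho>' where "\<rho>' = root M \<rho>1"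
  have Mpos: "0 < M" using M by simp
  have rp: "0 < \<rho>'" "\<rho>' < 1" "\<rho>' ^ M = \<rho>1"
    unfolding \<rho>'_def using r1 Mpos by (auto simp: real_root_pow_pos2)
  define C' where "C' = 2 * K * C / \<rho>1"
  have C'1: "1 \<le> C'"
  proof -
    have "1 \<le> 2 * K * C" using K1 C by (metis mult_ge1_I one_le_numeral)
    also have "\<dots> \<le> 2 * K * C / \<rho>1" using r1 K1 C by (simp add: le_divide_eq)
    finally show ?thesis unfolding C'_def .
  qed
  define gam where "gam = (\<lambda>v. 2 * K * (g v + k2 v))"
  have gam: "classK gam" unfolding gam_def
    using classK_comp[OF classK_lin2[of "2*K"] classK_add[OF g k2]] K1 by simp
  have main: "dist_set Nx A (traj F \<xi> u k) \<le> max (C' * \<rho>' ^ k * dist_set Nx A \<xi>) (gam (linf Nu u))"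
    if x: "\<xi> \<in> seqB n Nx" and u: "u \<in> inputs p Nu" for \<xi> u k
  proof -
    define d where "d = (\<lambda>k. dist_set Nx A (traj F \<xi> u k))"
    define v where "v = linf Nu u"
    define h where "h = k2 v"
    have dn: "\<And>k. 0 \<le> d k" unfolding d_def by (rule dist_nonneg[OF net A_sub A_ne traj_in[OF wp x u]])
    have v0: "0 \<le> v" unfolding v_def by (rule linf_nonneg[OF net u])
    have h0: "0 \<le> h" unfolding h_def by (rule classK_nonneg[OF k2 v0])
    have st: "\<And>k. d (Suc k) \<le> c * d k + h"
      unfolding d_def h_def v_def by (rule step_bound[where kay="\<lambda>s. c * s", OF net wp A_sub A_ne k2 kb' x u])
    define j where "j = k div M"
    define r where "r = k mod M"
    have kk: "k = M * j + r" unfolding j_def r_def by simp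
    have rM: "r \<le> M" unfolding r_def using M by (simp add: less_imp_le)
    have d0: "d 0 = dist_set Nx A \<xi>" unfolding d_def by simp
    have g0: "0 \<le> g v" using classK_nonneg[OF g v0] .
    have a0: "0 \<le> C * \<rho> ^ j * d 0" using C \<rho> dn[of 0] by simp
    have dj: "d (M * j) \<le> max (C * \<rho> ^ j * d 0) (g v)"
      using hb x u unfolding d_def v_def by simp
    have "d k + h \<le> L ^ r * (d (M*j) + h)"
      using iter_bound[where d=d and h=h, OF k1 dn h0, of "M*j" r] st kk
      by (simp add: sig_lin_pow L_def)
    also have "\<dots> \<le> K * (d (M*j) + h)"
      unfolding K_def by (rule mult_right_mono[OF power_increasing[OF rM L1]]) (use dn h0 in simp)
    also have "\<dots> \<le> K * max (2 * (C * \<rho> ^ j * d 0)) (2 * (g v + h))"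
      by (rule mult_left_mono) (use dj a0 g0 h0 K1 in \<open>auto simp: max_def split: if_splits\<close>)
    also have "\<dots> = max (2 * K * C * \<rho> ^ j * d 0) (gam v)"
      unfolding gam_def h_def using K1 by (simp add: max_mult_distrib_left algebra_simps)
    also have "\<dots> \<le> max (C' * \<rho>' ^ k * d 0) (gam v)"
    proof -
      have "\<rho> ^ j \<le> \<rho>1 ^ j" using \<rho> r1 by (simp add: power_mono)
      also have "\<rho>1 ^ j = \<rho>' ^ (M * j)" using rp by (simp add: power_mult)
      finally have e1: "\<rho> ^ j \<le> \<rho>' ^ (M * j)" .
      have "\<rho>' ^ M \<le> \<rho>' ^ r" by (rule power_decreasing[OF rM]) (use rp in auto)
      then have "\<rho>' ^ (M * j) * \<rho>1 \<le> \<rho>' ^ (M * j) * \<rho>' ^ r"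
        using rp by (simp add: mult_left_mono)
      also have "\<dots> = \<rho>' ^ k" using kk by (simp add: power_add)
      finally have e2: "\<rho>1 * \<rho> ^ j \<le> \<rho>' ^ k"
        using e1 r1 by (smt (verit) mult.commute mult_right_mono)
      have "2 * K * C * \<rho> ^ j * d 0 = (2 * K * C * d 0 / \<rho>1) * (\<rho>1 * \<rho> ^ j)"
        using r1 by (simp add: field_simps)
      also have "\<dots> \<le> (2 * K * C * d 0 / \<rho>1) * \<rho>' ^ k"
        by (rule mult_left_mono[OF e2]) (use K1 C dn[of 0] r1 in simp)
      also have "\<dots> = C' * \<rho>' ^ k * d 0" unfolding C'_def by (simp add: field_simps)
      finally show ?thesis by simp
    qed
    finally show ?thesis using h0 d0 unfolding d_def v_def by simp
  qed
  show ?thesis unfolding eISS_def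
    using C'1 rp gam main by (intro exI[of _ C'] exI[of _ \<rho>'] exI[of _ gam]) auto
qed

lemma const_input:
  assumes mu: "\<mu> \<in> seqB p Nu"
  shows "(\<lambda>_. \<mu>) \<in> inputs p Nu" "linf Nu (\<lambda>_. \<mu>) = supn Nu \<mu>"
  using mu by (auto simp: inputs_def linf_def)

lemma ISS_fwd:
  assumes net: "network_data n p Nx Nu I fi"
    and A_sub: "A \<subseteq> seqB n Nx" and A_ne: "A \<noteq> {}"
    and iss: "ISS n p Nx Nu F A"
  shows "ISS_iter 1 n p Nx Nu F A" "K_bounded n p Nx Nu F A"
proof -
  show "ISS_iter 1 n p Nx Nu F A" using iss by (simp add: ISS_def ISS_iter_def)
  obtain b g where b: "classKL b" and g: "classK g" and hb: "\<forall>\<xi>\<in>seqB n Nx. \<forall>u\<in>inputs p Nu. \<forall>k.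
        dist_set Nx A (traj F \<xi> u k) \<le> max (b (dist_set Nx A \<xi>) (real k)) (g (linf Nu u))"
    using iss unfolding ISS_def by blast
  have b1: "classK (\<lambda>r. b r 1)" using b by (simp add: classKL_def)
  have "dist_set Nx A (F \<xi> \<mu>) \<le> b (dist_set Nx A \<xi>) 1 + g (supn Nu \<mu>)"
    if x: "\<xi> \<in> seqB n Nx" and mu: "\<mu> \<in> seqB p Nu" for \<xi> \<mu>
  proof -
    have "dist_set Nx A (traj F \<xi> (\<lambda>_. \<mu>) 1) \<le> max (b (dist_set Nx A \<xi>) (real 1)) (g (linf Nu (\<lambda>_. \<mu>)))"
      using hb x const_input[OF mu] by blast
    moreover have "0 \<le> b (dist_set Nx A \<xi>) 1"
      using classK_nonneg[OF b1 dist_nonneg[OF net A_sub A_ne x]] .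
    moreover have "0 \<le> g (supn Nu \<mu>)" using classK_nonneg[OF g supn_nonneg[OF net mu]] .
    ultimately show ?thesis using const_input[OF mu] by simp
  qed
  then show "K_bounded n p Nx Nu F A" unfolding K_bounded_def using b1 g by blast
qed

lemma eISS_fwd:
  assumes net: "network_data n p Nx Nu I fi"
    and A_sub: "A \<subseteq> seqB n Nx" and A_ne: "A \<noteq> {}"
    and iss: "eISS n p Nx Nu F A"
  shows "eISS_iter 1 n p Nx Nu F A" "K_bounded_lin n p Nx Nu F A"
proof -
  show "eISS_iter 1 n p Nx Nu F A" using iss by (simp add: eISS_def eISS_iter_def)
  obtain C \<rho> g where C: "C \<ge> 1" and \<rho>: "0 \<le> \<rho>" "\<rho> < 1" and g: "classK g" and hb: "\<forall>\<xi>\<in>seqB n Nx. \<forall>u\<in>inputs p Nu. \<forall>k.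
        dist_set Nx A (traj F \<xi> u k) \<le> max (C * \<rho> ^ k * dist_set Nx A \<xi>) (g (linf Nu u))"
    using iss unfolding eISS_def by blast
  have "dist_set Nx A (F \<xi> \<mu>) \<le> C * dist_set Nx A \<xi> + g (supn Nu \<mu>)"
    if x: "\<xi> \<in> seqB n Nx" and mu: "\<mu> \<in> seqB p Nu" for \<xi> \<mu>
  proof -
    have "dist_set Nx A (traj F \<xi> (\<lambda>_. \<mu>) 1) \<le> max (C * \<rho> ^ 1 * dist_set Nx A \<xi>) (g (linf Nu (\<lambda>_. \<mu>)))"
      using hb x const_input[OF mu] by blast
    moreover have d0: "0 \<le> dist_set Nx A \<xi>" using dist_nonneg[OF net A_sub A_ne x] .
    moreover have "C * \<rho> * dist_set Nx A \<xi> \<le> C * dist_set Nx A \<xi>"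
    proof -
      have "\<rho> * dist_set Nx A \<xi> \<le> dist_set Nx A \<xi>" using \<rho> d0 by (simp add: mult_left_le_one_le)
      then show ?thesis using C by (simp add: mult.assoc mult_left_mono)
    qed
    moreover have "0 \<le> g (supn Nu \<mu>)" using classK_nonneg[OF g supn_nonneg[OF net mu]] .
    moreover have "0 \<le> C * dist_set Nx A \<xi>" using C d0 by simp
    ultimately show ?thesis using const_input[OF mu] by simp
  qed
  then have h: "\<forall>\<xi>\<in>seqB n Nx. \<forall>\<mu>\<in>seqB p Nu. dist_set Nx A (F \<xi> \<mu>) \<le> C * dist_set Nx A \<xi> + g (supn Nu \<mu>)"
    by blast
  have "C > 0" using C by simp
  then show "K_bounded_lin n p Nx Nu F A" unfolding K_bounded_lin_def using g h by blast
qed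

theorem proposition1:
  fixes n p :: "nat \<Rightarrow> nat"
    and Nx Nu :: "nat \<Rightarrow> (nat \<Rightarrow> real) \<Rightarrow> real"
    and I :: "nat \<Rightarrow> nat set"
    and fi :: "nat \<Rightarrow> (nat \<Rightarrow> real) \<Rightarrow> (nat \<Rightarrow> nat \<Rightarrow> real) \<Rightarrow> (nat \<Rightarrow> real) \<Rightarrow> (nat \<Rightarrow> real)"
    and A :: "(nat \<Rightarrow> nat \<Rightarrow> real) set"
  assumes net: "network_data n p Nx Nu I fi"
    and wp: "well_posed n p Nx Nu (net_map I fi)"
    and A_sub: "A \<subseteq> seqB n Nx" and A_ne: "A \<noteq> {}" and A_closed: "closed_in_X n Nx A"
  shows "(ISS n p Nx Nu (net_map I fi) A \<longleftrightarrow>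
            (\<exists>M\<ge>1. ISS_iter M n p Nx Nu (net_map I fi) A) \<and> K_bounded n p Nx Nu (net_map I fi) A)
       \<and> (eISS n p Nx Nu (net_map I fi) A \<longleftrightarrow>
            (\<exists>M\<ge>1. eISS_iter M n p Nx Nu (net_map I fi) A) \<and> K_bounded_lin n p Nx Nu (net_map I fi) A)"
  using ISS_fwd[OF net A_sub A_ne] eISS_fwd[OF net A_sub A_ne]
    ISS_back[OF net wp A_sub A_ne] eISS_back[OF net wp A_sub A_ne]
  by blast

end
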